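(* Let $S\subseteq[12]$ be such that $\mathsf{MAIS}(G^*_S)<\alpha(G^*_{S,u})$. Then $\beta^*_{\mathcal{B}^*_S}(1)\ge\bar{\chi}(G^*_{S,u})$.
   Context: Index coding model. A unicast index coding problem has receivers $u_1,\dots,u_n$ and messages $\mathbf{x}_j$, each a vector in $\mathcal{A}^m$ for a finite alphabet $\mathcal{A}$ and positive integer $m$ (all messages have the same length). Receiver $u_i$ demands $\mathbf{x}_j$, $j\in W_i$, and knows $\mathbf{x}_j$, $j\in K_i$, with $W_i\cap K_i=\emptyset$, the $W_i$ pairwise disjoint and every message demanded by exactly one receiver. An index code consists of an encoder mapping the messages to a codeword $\mathbf{c}\in\mathcal{A}^\ell$, subsets $R_i\subseteq[\ell]$ (receiver $u_i$ observes only $\mathbf{c}_{R_i}$), and decoders at each $u_i$ mapping $(\mathbf{c}_{R_i},\mathbf{x}_{K_i})$ to $\mathbf{x}_{W_i}$; it is valid if every receiver decodes correctly for all message values. Broadcast rate is $\ell/m$; locality at $u_i$ is $|R_i|/(m|W_i|)$ and the locality of the code is the maximum over receivers (receivers with no demand impose no constraint). $\beta^*_{\mathcal{B}}(r)$ is the infimum of broadcast rates of valid index codes for $\mathcal{B}$, over all $m\ge1$, with locality at most $r$. The problem $\mathcal{B}^*$ has three receivers and 12 messages with $W_1=\{1,2,3,4\}$, $W_2=\{5,6,7,8\}$, $W_3=\{9,10,11,12\}$, $K_1=\{5,6,9,10\}$, $K_2=\{1,2,9,11\}$, $K_3=\{1,3,5,7\}$. For $S\subseteq[12]$, $\mathcal{B}^*_S$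 is the sub-problem with receivers $u_1,u_2,u_3$, messages $\mathbf{x}_j$, $j\in S$, demand sets $W_i\cap S$ and side information sets $K_i\cap S$. $G^*$ is the directed graph on $[12]$ with a directed edge $(a,b)$ iff $b\in K_i$ where $a\in W_i$; $G^*_u$ is the undirected graph on $[12]$ with $\{a,b\}$ an edge iff both $(a,b)$ and $(b,a)$ are edges of $G^*$; $G^*_S$, $G^*_{S,u}$ are the subgraphs induced by $S$. $\mathsf{MAIS}(D)$ is the maximum number of vertices of an acyclic induced subgraph of a directed graph $D$; $\alpha$ and $\bar{\chi}$ are the independence number and clique cover number. *)

theory Defs
  imports Complex_Main "HOL-Library.FuncSet"
begin

definition Wd :: "nat \<Rightarrow> nat set" where
  "Wd i = (if i = 1 then {1,2,3,4} else if i = 2 then {5,6,7,8}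
           else if i = 3 then {9,10,11,12} else {})"

definition Kn :: "nat \<Rightarrow> nat set" where
  "Kn i = (if i = 1 then {5,6,9,10} else if i = 2 then {1,2,9,11}
           else if i = 3 then {1,3,5,7} else {})"

definition receivers :: "nat set" where
  "receivers = {1,2,3}"

definition Gstar :: "(nat \<times> nat) set" where
  "Gstar = {(a,b). \<exists>i\<in>receivers. a \<in> Wd i \<and> b \<in> Kn i}"

definition adjU :: "nat \<Rightarrow> nat \<Rightarrow> bool" where
  "adjU a b \<longleftrightarrow> (a,b) \<in> Gstar \<and> (b,a) \<in> Gstar"

definition MAIS :: "nat set \<Rightarrow> nat" where
  "MAIS S = Max {card T | T. T \<subseteq> S \<and> acyclic (Gstar \<inter> (T \<times> T))}"

definition alpha :: "nat set \<Rightarrow> nat" where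
  "alpha S = Max {card T | T. T \<subseteq> S \<and> (\<forall>a\<in>T. \<forall>b\<in>T. a \<noteq> b \<longrightarrow> \<not> adjU a b)}"

definition clique_cover :: "nat set \<Rightarrow> nat" where
  "clique_cover S = (LEAST k. \<exists>P. finite P \<and> card P = k
      \<and> (\<forall>C\<in>P. C \<noteq> {} \<and> (\<forall>a\<in>C. \<forall>b\<in>C. a \<noteq> b \<longrightarrow> adjU a b))
      \<and> pairwise disjnt P \<and> \<Union>P = S)"

text \<open>Message assignments: x j is the message vector x_j in A^m (coordinates 0..m-1),
  for j in S; everything else is undefined.\<close>
definition msgs :: "'a set \<Rightarrow> nat \<Rightarrow> nat set \<Rightarrow> (nat \<Rightarrow> nat \<Rightarrow> 'a) set" where
  "msgs A m S = {x. \<forall>j k. if j \<in> S \<and> k < m then x j k \<in> A else x j k = undefined}"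

text \<open>Encoder E maps messages to a codeword in A^l (positions 0..l-1); receiver i
  observes positions R i and must decode x_{W_i \<inter> S} from c_{R_i} and x_{K_i \<inter> S}.\<close>
definition valid_code ::
  "'a set \<Rightarrow> nat set \<Rightarrow> nat \<Rightarrow> nat \<Rightarrow> ((nat \<Rightarrow> nat \<Rightarrow> 'a) \<Rightarrow> nat \<Rightarrow> 'a) \<Rightarrow> (nat \<Rightarrow> nat set) \<Rightarrow> bool"
where
  "valid_code A S m l E R \<longleftrightarrow>
     (\<forall>x\<in>msgs A m S. \<forall>p<l. E x p \<in> A) \<and>
     (\<forall>i\<in>receivers. R i \<subseteq> {..<l} \<and>
        (\<exists>D. \<forall>x\<in>msgs A m S.
              D (restrict (E x) (R i)) (restrict x (Kn i \<inter> S)) = restrict x (Wd i \<inter> S)))"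

definition locality_le :: "real \<Rightarrow> nat set \<Rightarrow> nat \<Rightarrow> (nat \<Rightarrow> nat set) \<Rightarrow> bool" where
  "locality_le r S m R \<longleftrightarrow>
     (\<forall>i\<in>receivers. Wd i \<inter> S \<noteq> {} \<longrightarrow>
        real (card (R i)) \<le> r * real m * real (card (Wd i \<inter> S)))"

definition beta_star :: "'a set \<Rightarrow> nat set \<Rightarrow> real \<Rightarrow> real" where
  "beta_star A S r = Inf {real l / real m | l m E R.
       m \<ge> 1 \<and> valid_code A S m l E R \<and> locality_le r S m R}"

end

theory Submission
  imports Defs
begin


lemma Gstar_iff: "(a,b) \<in> Gstar \<longleftrightarrow> (a\<in>{1,2,3,4} \<and> b\<in>{5,6,9,10}) \<or> (a\<in>{5,6,7,8} \<and> b \<in>{1,2,9,11}) \<or> (a\<in>{9,10,11,12} \<and> b\<in>{1,3,5,7})"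
  unfolding Gstar_def receivers_def Wd_def Kn_def by auto

lemma acyc_rank: "(\<And>a b. (a,b) \<in> r \<Longrightarrow> f a < (f b::nat)) \<Longrightarrow> acyclic r"
proof -
  assume h: "\<And>a b. (a,b) \<in> r \<Longrightarrow> f a < (f b::nat)"
  have "r \<subseteq> inv_image less_than f" using h by auto
  then have "wf r" by (rule wf_subset[rotated]) simp
  then show ?thesis by (rule wf_acyclic)
qed

lemma acyc0: "acyclic (Gstar \<inter> ({1,2,3,4,7,8,12} \<times> {1,2,3,4,7,8,12}))"
  by (rule acyc_rank[where f="(\<lambda>v::nat. if v = 1 then 100::nat else if v = 2 then 100::nat else if v = 3 then 100::nat else if v = 4 then 100::nat else if v = 7 then 99::nat else if v = 8 then 99::nat else if v = 12 then 98::nat else 0)"]) (auto simp: Gstar_iff)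

lemma acyc1: "acyclic (Gstar \<inter> ({1,2,3,4,8,11,12} \<times> {1,2,3,4,8,11,12}))"
  by (rule acyc_rank[where f="(\<lambda>v::nat. if v = 1 then 100::nat else if v = 2 then 100::nat else if v = 3 then 100::nat else if v = 4 then 100::nat else if v = 8 then 98::nat else if v = 11 then 99::nat else if v = 12 then 99::nat else 0)"]) (auto simp: Gstar_iff)

lemma acyc2: "acyclic (Gstar \<inter> ({2,4,8,9,10,11,12} \<times> {2,4,8,9,10,11,12}))"
  by (rule acyc_rank[where f="(\<lambda>v::nat. if v = 2 then 99::nat else if v = 4 then 99::nat else if v = 8 then 98::nat else if v = 9 then 100::nat else if v = 10 then 100::nat else if v = 11 then 100::nat else if v = 12 then 100::nat else 0)"]) (auto simp: Gstar_iff)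

lemma acyc3: "acyclic (Gstar \<inter> ({3,4,5,6,7,8,12} \<times> {3,4,5,6,7,8,12}))"
  by (rule acyc_rank[where f="(\<lambda>v::nat. if v = 3 then 99::nat else if v = 4 then 99::nat else if v = 5 then 100::nat else if v = 6 then 100::nat else if v = 7 then 100::nat else if v = 8 then 100::nat else if v = 12 then 98::nat else 0)"]) (auto simp: Gstar_iff)

lemma acyc4: "acyclic (Gstar \<inter> ({4,5,6,7,8,10,12} \<times> {4,5,6,7,8,10,12}))"
  by (rule acyc_rank[where f="(\<lambda>v::nat. if v = 4 then 98::nat else if v = 5 then 100::nat else if v = 6 then 100::nat else if v = 7 then 100::nat else if v = 8 then 100::nat else if v = 10 then 99::nat else if v = 12 then 99::nat else 0)"]) (auto simp: Gstar_iff)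

lemma acyc5: "acyclic (Gstar \<inter> ({4,6,8,9,10,11,12} \<times> {4,6,8,9,10,11,12}))"
  by (rule acyc_rank[where f="(\<lambda>v::nat. if v = 4 then 98::nat else if v = 6 then 99::nat else if v = 8 then 99::nat else if v = 9 then 100::nat else if v = 10 then 100::nat else if v = 11 then 100::nat else if v = 12 then 100::nat else 0)"]) (auto simp: Gstar_iff)

lemma acyc6: "acyclic (Gstar \<inter> ({1,2,4,7,8,12} \<times> {1,2,4,7,8,12}))"
  by (rule acyc_rank[where f="(\<lambda>v::nat. if v = 1 then 100::nat else if v = 2 then 100::nat else if v = 4 then 100::nat else if v = 7 then 99::nat else if v = 8 then 99::nat else if v = 12 then 98::nat else 0)"]) (auto simp: Gstar_iff)

lemma acyc7: "acyclic (Gstar \<inter> ({2,3,4,7,8,12} \<times> {2,3,4,7,8,12}))"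
  by (rule acyc_rank[where f="(\<lambda>v::nat. if v = 2 then 100::nat else if v = 3 then 100::nat else if v = 4 then 100::nat else if v = 7 then 99::nat else if v = 8 then 99::nat else if v = 12 then 98::nat else 0)"]) (auto simp: Gstar_iff)

lemma acyc8: "acyclic (Gstar \<inter> ({4,5,7,8,10,12} \<times> {4,5,7,8,10,12}))"
  by (rule acyc_rank[where f="(\<lambda>v::nat. if v = 4 then 98::nat else if v = 5 then 100::nat else if v = 7 then 100::nat else if v = 8 then 100::nat else if v = 10 then 99::nat else if v = 12 then 99::nat else 0)"]) (auto simp: Gstar_iff)

lemma acyc9: "acyclic (Gstar \<inter> ({4,6,7,8,10,12} \<times> {4,6,7,8,10,12}))"
  by (rule acyc_rank[where f="(\<lambda>v::nat. if v = 4 then 98::nat else if v = 6 then 100::nat else if v = 7 then 100::nat else if v = 8 then 100::nat else if v = 10 then 99::nat else if v = 12 then 99::nat else 0)"]) (auto simp: Gstar_iff)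

lemma acyc10: "acyclic (Gstar \<inter> ({2,4,8,9,10,12} \<times> {2,4,8,9,10,12}))"
  by (rule acyc_rank[where f="(\<lambda>v::nat. if v = 2 then 99::nat else if v = 4 then 99::nat else if v = 8 then 98::nat else if v = 9 then 100::nat else if v = 10 then 100::nat else if v = 12 then 100::nat else 0)"]) (auto simp: Gstar_iff)

lemma acyc11: "acyclic (Gstar \<inter> ({2,4,8,10,11,12} \<times> {2,4,8,10,11,12}))"
  by (rule acyc_rank[where f="(\<lambda>v::nat. if v = 2 then 99::nat else if v = 4 then 99::nat else if v = 8 then 98::nat else if v = 10 then 100::nat else if v = 11 then 100::nat else if v = 12 then 100::nat else 0)"]) (auto simp: Gstar_iff)

lemma acyc12: "acyclic (Gstar \<inter> ({1,3,4,8,11,12} \<times> {1,3,4,8,11,12}))"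
  by (rule acyc_rank[where f="(\<lambda>v::nat. if v = 1 then 100::nat else if v = 3 then 100::nat else if v = 4 then 100::nat else if v = 8 then 98::nat else if v = 11 then 99::nat else if v = 12 then 99::nat else 0)"]) (auto simp: Gstar_iff)

lemma acyc13: "acyclic (Gstar \<inter> ({2,3,4,8,11,12} \<times> {2,3,4,8,11,12}))"
  by (rule acyc_rank[where f="(\<lambda>v::nat. if v = 2 then 100::nat else if v = 3 then 100::nat else if v = 4 then 100::nat else if v = 8 then 98::nat else if v = 11 then 99::nat else if v = 12 then 99::nat else 0)"]) (auto simp: Gstar_iff)

lemma acyc14: "acyclic (Gstar \<inter> ({3,4,5,6,8,12} \<times> {3,4,5,6,8,12}))"
  by (rule acyc_rank[where f="(\<lambda>v::nat. if v = 3 then 99::nat else if v = 4 then 99::nat else if v = 5 then 100::nat else if v = 6 then 100::nat else if v = 8 then 100::nat else if v = 12 then 98::nat else 0)"]) (auto simp: Gstar_iff)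

lemma acyc15: "acyclic (Gstar \<inter> ({3,4,6,7,8,12} \<times> {3,4,6,7,8,12}))"
  by (rule acyc_rank[where f="(\<lambda>v::nat. if v = 3 then 99::nat else if v = 4 then 99::nat else if v = 6 then 100::nat else if v = 7 then 100::nat else if v = 8 then 100::nat else if v = 12 then 98::nat else 0)"]) (auto simp: Gstar_iff)

lemma acyc16: "acyclic (Gstar \<inter> ({4,6,8,9,11,12} \<times> {4,6,8,9,11,12}))"
  by (rule acyc_rank[where f="(\<lambda>v::nat. if v = 4 then 98::nat else if v = 6 then 99::nat else if v = 8 then 99::nat else if v = 9 then 100::nat else if v = 11 then 100::nat else if v = 12 then 100::nat else 0)"]) (auto simp: Gstar_iff)

lemma acyc17: "acyclic (Gstar \<inter> ({4,6,8,10,11,12} \<times> {4,6,8,10,11,12}))"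
  by (rule acyc_rank[where f="(\<lambda>v::nat. if v = 4 then 98::nat else if v = 6 then 99::nat else if v = 8 then 99::nat else if v = 10 then 100::nat else if v = 11 then 100::nat else if v = 12 then 100::nat else 0)"]) (auto simp: Gstar_iff)


lemma bool12:
  assumes "\<not>(p1 \<and> p5)" "\<not>(p1 \<and> p6)" "\<not>(p2 \<and> p5)" "\<not>(p2 \<and> p6)" "\<not>(p1 \<and> p9)" "\<not>(p1 \<and> p10)"
   "\<not>(p3 \<and> p9)" "\<not>(p3 \<and> p10)" "\<not>(p5 \<and> p9)" "\<not>(p5 \<and> p11)" "\<not>(p7 \<and> p9)" "\<not>(p7 \<and> p11)"
  shows "(\<not>p1 \<and> \<not>p3 \<and> \<not>p5 \<and> \<not>p6 \<and> \<not>p9 \<and> \<not>p11) \<or>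
         (\<not>p1 \<and> \<not>p2 \<and> \<not>p5 \<and> \<not>p7 \<and> \<not>p9 \<and> \<not>p10) \<or>
         (\<not>p5 \<and> \<not>p6 \<and> \<not>p9 \<and> \<not>p10 \<and> \<not>p11) \<or>
         (\<not>p5 \<and> \<not>p6 \<and> \<not>p7 \<and> \<not>p9 \<and> \<not>p10) \<or>
         (\<not>p1 \<and> \<not>p3 \<and> \<not>p5 \<and> \<not>p6 \<and> \<not>p7) \<or>
         (\<not>p1 \<and> \<not>p2 \<and> \<not>p9 \<and> \<not>p10 \<and> \<not>p11) \<or>
         (\<not>p1 \<and> \<not>p2 \<and> \<not>p3 \<and> \<not>p9 \<and> \<not>p11) \<or>
         (\<not>p1 \<and> \<not>p2 \<and> \<not>p3 \<and> \<not>p5 \<and> \<not>p7)"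
  using assms by sat
lemma adjU_iff: "adjU a b \<longleftrightarrow> (a,b) \<in> Gstar \<and> (b,a) \<in> Gstar"
  by (simp add: adjU_def)

lemma upto12: "{1..12::nat} = {1,2,3,4,5,6,7,8,9,10,11,12}" by (rule set_eqI) (simp, presburger)

definition "F1 = {2,4,7,8,10,12::nat}"
definition "F2 = {3,4,6,8,11,12::nat}"

lemma cyc_char:
  assumes T: "T \<subseteq> {1..12}" and ind: "\<forall>a\<in>T. \<forall>b\<in>T. a \<noteq> b \<longrightarrow> \<not> adjU a b"
    and nac: "\<not> acyclic (Restr Gstar T)"
  shows "(T \<subseteq> F1 \<and> 2 \<in> T \<and> 7 \<in> T \<and> 10 \<in> T) \<or> (T \<subseteq> F2 \<and> 3 \<in> T \<and> 6 \<in> T \<and> 11 \<in> T)"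
proof -
  have e: "\<not>(a \<in> T \<and> b \<in> T)" if "adjU a b" "a \<noteq> b" for a b using ind that by blast
  have ad: "adjU a b" if "a \<in> {1,2}" "b \<in> {5,6}" for a b using that by (auto simp: adjU_iff Gstar_iff)
  have ad2: "adjU a b" if "a \<in> {1,3}" "b \<in> {9,10}" for a b using that by (auto simp: adjU_iff Gstar_iff)
  have ad3: "adjU a b" if "a \<in> {5,7}" "b \<in> {9,11}" for a b using that by (auto simp: adjU_iff Gstar_iff)
  have sub: "\<not> T \<subseteq> N" if "acyclic (Restr Gstar N)" for N
  proof
    assume "T \<subseteq> N"
    then have "Restr Gstar T \<subseteq> Restr Gstar N" by auto
    then show False using nac acyclic_subset that by blast
  qed
  have TT: "\<And>v. v \<in> T \<Longrightarrow> v \<in> {1,2,3,4,5,6,7,8,9,10,11,12}" using T upto12 by auto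
  have D: "(1\<notin>T \<and> 3\<notin>T \<and> 5\<notin>T \<and> 6\<notin>T \<and> 9\<notin>T \<and> 11\<notin>T) \<or>
         (1\<notin>T \<and> 2\<notin>T \<and> 5\<notin>T \<and> 7\<notin>T \<and> 9\<notin>T \<and> 10\<notin>T) \<or>
         (5\<notin>T \<and> 6\<notin>T \<and> 9\<notin>T \<and> 10\<notin>T \<and> 11\<notin>T) \<or>
         (5\<notin>T \<and> 6\<notin>T \<and> 7\<notin>T \<and> 9\<notin>T \<and> 10\<notin>T) \<or>
         (1\<notin>T \<and> 3\<notin>T \<and> 5\<notin>T \<and> 6\<notin>T \<and> 7\<notin>T) \<or>
         (1\<notin>T \<and> 2\<notin>T \<and> 9\<notin>T \<and> 10\<notin>T \<and> 11\<notin>T) \<or>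
         (1\<notin>T \<and> 2\<notin>T \<and> 3\<notin>T \<and> 9\<notin>T \<and> 11\<notin>T) \<or>
         (1\<notin>T \<and> 2\<notin>T \<and> 3\<notin>T \<and> 5\<notin>T \<and> 7\<notin>T)"
    apply (rule bool12)
    by (rule e; simp add: adjU_iff Gstar_iff)+
  have sb: "T \<subseteq> M" if "\<And>v. v \<in> {1,2,3,4,5,6,7,8,9,10,11,12} \<Longrightarrow> v \<notin> M \<Longrightarrow> v \<notin> T" for M
    using that TT by blast
  have "(T \<subseteq> F1) \<or> (T \<subseteq> F2) \<or> T \<subseteq> {1,2,3,4,7,8,12} \<or> T \<subseteq> {1,2,3,4,8,11,12} \<or>
     T \<subseteq> {2,4,8,9,10,11,12} \<or> T \<subseteq> {3,4,5,6,7,8,12} \<or> T \<subseteq> {4,5,6,7,8,10,12} \<or> T \<subseteq> {4,6,8,9,10,11,12}"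
    using D unfolding F1_def F2_def
    apply (elim disjE)
    apply (rule disjI1, rule sb, fastforce)
    apply (rule disjI2, rule disjI1, rule sb, fastforce)
    apply (rule disjI2, rule disjI2, rule disjI1, rule sb, fastforce)
    apply (rule disjI2, rule disjI2, rule disjI2, rule disjI1, rule sb, fastforce)
    apply (rule disjI2, rule disjI2, rule disjI2, rule disjI2, rule disjI1, rule sb, fastforce)
    apply (rule disjI2, rule disjI2, rule disjI2, rule disjI2, rule disjI2, rule disjI1, rule sb, fastforce)
    apply (rule disjI2, rule disjI2, rule disjI2, rule disjI2, rule disjI2, rule disjI2, rule disjI1, rule sb, fastforce)
    apply (rule disjI2, rule disjI2, rule disjI2, rule disjI2, rule disjI2, rule disjI2, rule disjI2, rule sb, fastforce)
    done
  moreover have "\<not> T \<subseteq> {1,2,3,4,7,8,12}" using sub acyc0 by blast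
  moreover have "\<not> T \<subseteq> {1,2,3,4,8,11,12}" using sub acyc1 by blast
  moreover have "\<not> T \<subseteq> {2,4,8,9,10,11,12}" using sub acyc2 by blast
  moreover have "\<not> T \<subseteq> {3,4,5,6,7,8,12}" using sub acyc3 by blast
  moreover have "\<not> T \<subseteq> {4,5,6,7,8,10,12}" using sub acyc4 by blast
  moreover have "\<not> T \<subseteq> {4,6,8,9,10,11,12}" using sub acyc5 by blast
  moreover have "T \<subseteq> F1 \<Longrightarrow> 10 \<in> T" using sub[OF acyc6] unfolding F1_def by auto
  moreover have "T \<subseteq> F1 \<Longrightarrow> 2 \<in> T" using sub[OF acyc8] unfolding F1_def by auto
  moreover have "T \<subseteq> F1 \<Longrightarrow> 7 \<in> T" using sub[OF acyc10] unfolding F1_def by auto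
  moreover have "T \<subseteq> F2 \<Longrightarrow> 6 \<in> T" using sub[OF acyc12] unfolding F2_def by auto
  moreover have "T \<subseteq> F2 \<Longrightarrow> 11 \<in> T" using sub[OF acyc14] unfolding F2_def by auto
  moreover have "T \<subseteq> F2 \<Longrightarrow> 3 \<in> T" using sub[OF acyc16] unfolding F2_def by auto
  ultimately show ?thesis by blast
qed


lemma fin_cards: "finite S \<Longrightarrow> finite {card T |T. T \<subseteq> S \<and> P T}"
  by (rule finite_subset[of _ "card ` Pow S"]) auto

lemma mais_ge: "finite S \<Longrightarrow> T \<subseteq> S \<Longrightarrow> acyclic (Restr Gstar T) \<Longrightarrow> card T \<le> MAIS S"
proof -
  assume a: "finite S" "T \<subseteq> S" "acyclic (Restr Gstar T)"
  have "card T \<in> {card T |T. T \<subseteq> S \<and> acyclic (Restr Gstar T)}" using a(2,3) by blast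
  then show ?thesis unfolding MAIS_def by (rule Max_ge[OF fin_cards[OF a(1)]])
qed

lemma swap_le:
  assumes "finite S" "T \<subseteq> S" "t \<in> T" "s \<in> S" "s \<notin> T" "T - {t} \<union> {s} \<subseteq> N" "acyclic (Restr Gstar N)"
  shows "card T \<le> MAIS S"
proof -
  have fT: "finite T" using assms(1,2) finite_subset by blast
  have "card (T - {t} \<union> {s}) = card T"
    using fT assms(3,5) by (simp add: card.insert_remove) (metis card_Suc_Diff1 Suc_pred card_gt_0_iff empty_iff)
  moreover have "acyclic (Restr Gstar (T - {t} \<union> {s}))"
    by (rule acyclic_subset[OF assms(7)]) (use assms(6) in auto)
  moreover have "T - {t} \<union> {s} \<subseteq> S" using assms by auto
  ultimately show ?thesis using mais_ge[OF assms(1)] by metis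
qed

lemma S_cases:
  assumes S: "S \<subseteq> {1..12}" and lt: "MAIS S < alpha S"
  shows "S \<subseteq> F1 \<or> S \<subseteq> F2"
proof -
  have fS: "finite S" using S by (rule finite_subset) simp
  have ne: "{card T |T. T \<subseteq> S \<and> (\<forall>a\<in>T. \<forall>b\<in>T. a \<noteq> b \<longrightarrow> \<not> adjU a b)} \<noteq> {}"
  proof -
    have "card {} \<in> {card T |T. T \<subseteq> S \<and> (\<forall>a\<in>T. \<forall>b\<in>T. a \<noteq> b \<longrightarrow> \<not> adjU a b)}" by (rule CollectI, rule exI[of _ "{}"]) simp
    then show ?thesis by blast
  qed
  have "alpha S \<in> {card T |T. T \<subseteq> S \<and> (\<forall>a\<in>T. \<forall>b\<in>T. a \<noteq> b \<longrightarrow> \<not> adjU a b)}"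
    unfolding alpha_def by (rule Max_in[OF fin_cards[OF fS] ne])
  then obtain T where TS: "T \<subseteq> S" and ind: "\<forall>a\<in>T. \<forall>b\<in>T. a \<noteq> b \<longrightarrow> \<not> adjU a b"
     and cT: "card T = alpha S" by (auto simp only: mem_Collect_eq)
  have nac: "\<not> acyclic (Restr Gstar T)" using mais_ge[OF fS TS] cT lt by linarith
  have T12: "T \<subseteq> {1..12}" using TS S by blast
  have Sv: "\<And>s. s \<in> S \<Longrightarrow> s \<in> {1,2,3,4,5,6,7,8,9,10,11,12}" using S upto12 by auto
  have nle: "\<not> card T \<le> MAIS S" using cT lt by linarith
  from cyc_char[OF T12 ind nac] show ?thesis
  proof
    assume h: "T \<subseteq> F1 \<and> 2 \<in> T \<and> 7 \<in> T \<and> 10 \<in> T"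
    have "S \<subseteq> F1"
    proof
      fix s assume sS: "s \<in> S"
      show "s \<in> F1"
      proof (rule ccontr)
        assume sF: "s \<notin> F1"
        then have sT: "s \<notin> T" using h by blast
        have "s = 1 \<or> s = 3 \<or> s = 5 \<or> s = 6 \<or> s = 9 \<or> s = 11" using Sv[OF sS] sF unfolding F1_def by auto
        then show False
        proof (elim disjE)
          assume s1: "s = 1"
          have sub: "T - {10} \<union> {s} \<subseteq> {1,2,4,7,8,12}" using h s1 unfolding F1_def by auto
          have "card T \<le> MAIS S" by (rule swap_le[OF fS TS _ sS sT sub acyc6]) (use h in simp)
          then show False using nle by simp
        next
          assume s1: "s = 3"
          have sub: "T - {10} \<union> {s} \<subseteq> {2,3,4,7,8,12}" using h s1 unfolding F1_def by auto
          have "card T \<le> MAIS S" by (rule swap_le[OF fS TS _ sS sT sub acyc7]) (use h in simp)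
          then show False using nle by simp
        next
          assume s1: "s = 5"
          have sub: "T - {2} \<union> {s} \<subseteq> {4,5,7,8,10,12}" using h s1 unfolding F1_def by auto
          have "card T \<le> MAIS S" by (rule swap_le[OF fS TS _ sS sT sub acyc8]) (use h in simp)
          then show False using nle by simp
        next
          assume s1: "s = 6"
          have sub: "T - {2} \<union> {s} \<subseteq> {4,6,7,8,10,12}" using h s1 unfolding F1_def by auto
          have "card T \<le> MAIS S" by (rule swap_le[OF fS TS _ sS sT sub acyc9]) (use h in simp)
          then show False using nle by simp
        next
          assume s1: "s = 9"
          have sub: "T - {7} \<union> {s} \<subseteq> {2,4,8,9,10,12}" using h s1 unfolding F1_def by auto
          have "card T \<le> MAIS S" by (rule swap_le[OF fS TS _ sS sT sub acyc10]) (use h in simp)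
          then show False using nle by simp
        next
          assume s1: "s = 11"
          have sub: "T - {7} \<union> {s} \<subseteq> {2,4,8,10,11,12}" using h s1 unfolding F1_def by auto
          have "card T \<le> MAIS S" by (rule swap_le[OF fS TS _ sS sT sub acyc11]) (use h in simp)
          then show False using nle by simp
        qed
      qed
    qed
    then show ?thesis by blast
  next
    assume h: "T \<subseteq> F2 \<and> 3 \<in> T \<and> 6 \<in> T \<and> 11 \<in> T"
    have "S \<subseteq> F2"
    proof
      fix s assume sS: "s \<in> S"
      show "s \<in> F2"
      proof (rule ccontr)
        assume sF: "s \<notin> F2"
        then have sT: "s \<notin> T" using h by blast
        have "s = 1 \<or> s = 2 \<or> s = 5 \<or> s = 7 \<or> s = 9 \<or> s = 10" using Sv[OF sS] sF unfolding F2_def by auto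
        then show False
        proof (elim disjE)
          assume s1: "s = 1"
          have sub: "T - {6} \<union> {s} \<subseteq> {1,3,4,8,11,12}" using h s1 unfolding F2_def by auto
          have "card T \<le> MAIS S" by (rule swap_le[OF fS TS _ sS sT sub acyc12]) (use h in simp)
          then show False using nle by simp
        next
          assume s1: "s = 2"
          have sub: "T - {6} \<union> {s} \<subseteq> {2,3,4,8,11,12}" using h s1 unfolding F2_def by auto
          have "card T \<le> MAIS S" by (rule swap_le[OF fS TS _ sS sT sub acyc13]) (use h in simp)
          then show False using nle by simp
        next
          assume s1: "s = 5"
          have sub: "T - {11} \<union> {s} \<subseteq> {3,4,5,6,8,12}" using h s1 unfolding F2_def by auto
          have "card T \<le> MAIS S" by (rule swap_le[OF fS TS _ sS sT sub acyc14]) (use h in simp)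
          then show False using nle by simp
        next
          assume s1: "s = 7"
          have sub: "T - {11} \<union> {s} \<subseteq> {3,4,6,7,8,12}" using h s1 unfolding F2_def by auto
          have "card T \<le> MAIS S" by (rule swap_le[OF fS TS _ sS sT sub acyc15]) (use h in simp)
          then show False using nle by simp
        next
          assume s1: "s = 9"
          have sub: "T - {3} \<union> {s} \<subseteq> {4,6,8,9,11,12}" using h s1 unfolding F2_def by auto
          have "card T \<le> MAIS S" by (rule swap_le[OF fS TS _ sS sT sub acyc16]) (use h in simp)
          then show False using nle by simp
        next
          assume s1: "s = 10"
          have sub: "T - {3} \<union> {s} \<subseteq> {4,6,8,10,11,12}" using h s1 unfolding F2_def by auto
          have "card T \<le> MAIS S" by (rule swap_le[OF fS TS _ sS sT sub acyc17]) (use h in simp)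
          then show False using nle by simp
        qed
      qed
    qed
    then show ?thesis by blast
  qed
qed



definition Blk :: "'a set \<Rightarrow> nat \<Rightarrow> (nat \<Rightarrow> 'a) set" where
  "Blk A m = PiE {..<m} (\<lambda>_. A)"

lemma card_PiE_Blk: "finite A \<Longrightarrow> finite W \<Longrightarrow> card (PiE W (\<lambda>_. Blk A m)) = card A ^ (m * card W)"
  by (simp add: card_PiE Blk_def power_mult)

lemma card_PiE_const: "finite R \<Longrightarrow> card (PiE R (\<lambda>_. A)) = card A ^ card R"
  by (simp add: card_PiE)

lemma fiber_surj:
  assumes x0: "x0 \<in> msgs A m S" and WS: "W \<subseteq> S" and UW: "U \<inter> W = {}"
  shows "PiE W (\<lambda>_. Blk A m) \<subseteq> (\<lambda>x. restrict x W) ` {x \<in> msgs A m S. \<forall>v\<in>U. x v = x0 v}"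
proof
  fix w assume w: "w \<in> PiE W (\<lambda>_. Blk A m)"
  have x0P: "if j \<in> S \<and> k < m then x0 j k \<in> A else x0 j k = undefined" for j k
    using x0[unfolded msgs_def mem_Collect_eq, rule_format, of j k] .
  define z where "z = (\<lambda>j. if j \<in> W then w j else x0 j)"
  have zP: "if j \<in> S \<and> k < m then z j k \<in> A else z j k = undefined" for j k
  proof (cases "j \<in> W")
    case True
    then have wj: "w j \<in> PiE {..<m} (\<lambda>_. A)" using w by (simp add: Blk_def PiE_iff)
    have jS: "j \<in> S" using True WS by blast
    show ?thesis
    proof (cases "k < m")
      case True
      then show ?thesis using wj jS \<open>j \<in> W\<close> unfolding z_def by (simp add: PiE_iff)
    next
      case False
      then have "w j k = undefined" using PiE_arb[OF wj, of k] by simp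
      then show ?thesis using False \<open>j \<in> W\<close> unfolding z_def by simp
    qed
  next
    case False
    then show ?thesis using x0P[of j k] unfolding z_def by simp
  qed
  have zm: "z \<in> msgs A m S" unfolding msgs_def mem_Collect_eq by (intro allI zP)
  have zU: "\<forall>v\<in>U. z v = x0 v" using UW unfolding z_def by auto
  have zw: "restrict z W = w"
  proof
    fix j show "restrict z W j = w j"
    proof (cases "j \<in> W")
      case True then show ?thesis unfolding z_def by simp
    next
      case False then show ?thesis using PiE_arb[OF w False] by simp
    qed
  qed
  show "w \<in> (\<lambda>x. restrict x W) ` {x \<in> msgs A m S. \<forall>v\<in>U. x v = x0 v}"
    by (rule image_eqI[of _ _ z]) (use zw zm zU in simp_all)
qed

lemma count_inj:
  assumes fG: "finite G" and gX: "g ` X \<subseteq> G" and PX: "P \<subseteq> h ` X" and cGP: "card G \<le> card P"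
    and hD: "\<And>x. x \<in> X \<Longrightarrow> h x = D (g x)" and x: "x \<in> X" and y: "y \<in> X" and hxy: "h x = h y"
  shows "g x = g y"
proof -
  have hX: "h ` X = D ` (g ` X)" unfolding image_image by (rule image_cong[OF refl hD])
  have fgX: "finite (g ` X)" using fG gX finite_subset by blast
  have fhX: "finite (h ` X)" using hX fgX by simp
  have "card (g ` X) \<le> card G" using card_mono[OF fG gX] .
  also have "\<dots> \<le> card P" by (rule cGP)
  also have "\<dots> \<le> card (h ` X)" by (rule card_mono[OF fhX PX])
  also have "\<dots> = card (D ` (g ` X))" using hX by simp
  finally have "card (g ` X) \<le> card (D ` (g ` X))" .
  moreover have "card (D ` (g ` X)) \<le> card (g ` X)" by (rule card_image_le[OF fgX])
  ultimately have "card (D ` (g ` X)) = card (g ` X)" by simp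
  then have "inj_on D (g ` X)" by (rule eq_card_imp_inj_on[OF fgX])
  moreover have "D (g x) = D (g y)" using hD[OF x] hD[OF y] hxy by simp
  ultimately show ?thesis using x y by (auto dest: inj_onD)
qed

lemma count_le:
  assumes fG: "finite G" and gX: "g ` X \<subseteq> G" and PX: "P \<subseteq> h ` X"
    and hD: "\<And>x. x \<in> X \<Longrightarrow> h x = D (g x)"
  shows "card P \<le> card G"
proof -
  have hX: "h ` X = D ` (g ` X)" unfolding image_image by (rule image_cong[OF refl hD])
  have fgX: "finite (g ` X)" using fG gX finite_subset by blast
  have fhX: "finite (h ` X)" using hX fgX by simp
  have "card P \<le> card (h ` X)" by (rule card_mono[OF fhX PX])
  also have "\<dots> = card (D ` (g ` X))" using hX by simp
  also have "\<dots> \<le> card (g ` X)" by (rule card_image_le[OF fgX])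
  also have "\<dots> \<le> card G" using card_mono[OF fG gX] .
  finally show ?thesis .
qed


lemma KW_disj: "i \<in> receivers \<Longrightarrow> Kn i \<inter> Wd i = {}"
  by (auto simp: receivers_def Kn_def Wd_def)

lemma WW_disj: "i \<in> receivers \<Longrightarrow> j \<in> receivers \<Longrightarrow> i \<noteq> j \<Longrightarrow> Wd i \<inter> Wd j = {}"
  by (auto simp: receivers_def Wd_def)

lemma msgs_ex: "a0 \<in> A \<Longrightarrow> (\<lambda>j k. if j \<in> S \<and> k < m then a0 else undefined) \<in> msgs A m S"
  unfolding msgs_def by simp

lemma valid_E: "valid_code A S m l E R \<Longrightarrow> x \<in> msgs A m S \<Longrightarrow> p < l \<Longrightarrow> E x p \<in> A"
  unfolding valid_code_def by blast

lemma valid_R: "valid_code A S m l E R \<Longrightarrow> i \<in> receivers \<Longrightarrow> R i \<subseteq> {..<l}"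
  unfolding valid_code_def by blast

lemma valid_D: "valid_code A S m l E R \<Longrightarrow> i \<in> receivers \<Longrightarrow>
   \<exists>D. \<forall>x\<in>msgs A m S. D (restrict (E x) (R i)) (restrict x (Kn i \<inter> S)) = restrict x (Wd i \<inter> S)"
  unfolding valid_code_def by blast

lemma recv_setup:
  assumes V: "valid_code A S m l E R" and i: "i \<in> receivers" and x0: "x0 \<in> msgs A m S"
    and KU: "Kn i \<inter> S \<subseteq> U" and UW: "U \<inter> (Wd i \<inter> S) = {}"
  shows "\<exists>D. PiE (Wd i \<inter> S) (\<lambda>_. Blk A m) \<subseteq> (\<lambda>x. restrict x (Wd i \<inter> S)) ` {x \<in> msgs A m S. \<forall>v\<in>U. x v = x0 v}
     \<and> (\<forall>x \<in> {x \<in> msgs A m S. \<forall>v\<in>U. x v = x0 v}. restrict x (Wd i \<inter> S) = D (restrict (E x) (R i)))"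
proof -
  obtain D where D: "\<forall>x\<in>msgs A m S. D (restrict (E x) (R i)) (restrict x (Kn i \<inter> S)) = restrict x (Wd i \<inter> S)"
    using valid_D[OF V i] by blast
  have P: "PiE (Wd i \<inter> S) (\<lambda>_. Blk A m) \<subseteq> (\<lambda>x. restrict x (Wd i \<inter> S)) ` {x \<in> msgs A m S. \<forall>v\<in>U. x v = x0 v}"
    by (rule fiber_surj[OF x0 _ UW]) blast
  have "restrict x (Wd i \<inter> S) = D (restrict (E x) (R i)) (restrict x0 (Kn i \<inter> S))"
    if "x \<in> {x \<in> msgs A m S. \<forall>v\<in>U. x v = x0 v}" for x
  proof -
    have xm: "x \<in> msgs A m S" and xU: "\<forall>v\<in>U. x v = x0 v" using that by auto
    have "restrict x (Kn i \<inter> S) = restrict x0 (Kn i \<inter> S)"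
      by (rule restrict_ext) (use xU KU in blast)
    then show ?thesis using D xm by metis
  qed
  then show ?thesis using P by (intro exI[of _ "\<lambda>c. D c (restrict x0 (Kn i \<inter> S))"]) blast
qed

lemma gX_sub:
  assumes V: "valid_code A S m l E R" and i: "i \<in> receivers"
  shows "(\<lambda>x. restrict (E x) (R i)) ` {x \<in> msgs A m S. Q x} \<subseteq> PiE (R i) (\<lambda>_. A)"
proof
  fix c assume "c \<in> (\<lambda>x. restrict (E x) (R i)) ` {x \<in> msgs A m S. Q x}"
  then obtain x where x: "x \<in> msgs A m S" and c: "c = restrict (E x) (R i)" by blast
  have "\<forall>p\<in>R i. E x p \<in> A" using valid_E[OF V x] valid_R[OF V i] by blast
  then show "c \<in> PiE (R i) (\<lambda>_. A)" unfolding c by (simp add: restrict_PiE_iff)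
qed

lemma code_lower:
  assumes fA: "finite A" and A2: "card A \<ge> 2" and V: "valid_code A S m l E R" and i: "i \<in> receivers"
  shows "m * card (Wd i \<inter> S) \<le> card (R i)"
proof -
  obtain a0 where a0: "a0 \<in> A" using A2 by (metis card.empty ex_in_conv not_numeral_le_zero)
  note x0 = msgs_ex[OF a0, of S m]
  obtain D where P: "PiE (Wd i \<inter> S) (\<lambda>_. Blk A m) \<subseteq> (\<lambda>x. restrict x (Wd i \<inter> S)) ` {x \<in> msgs A m S. \<forall>v\<in>Kn i \<inter> S. x v = (\<lambda>j k. if j \<in> S \<and> k < m then a0 else undefined) v}"
    and hD: "\<forall>x \<in> {x \<in> msgs A m S. \<forall>v\<in>Kn i \<inter> S. x v = (\<lambda>j k. if j \<in> S \<and> k < m then a0 else undefined) v}. restrict x (Wd i \<inter> S) = D (restrict (E x) (R i))"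
    using recv_setup[OF V i x0, of "Kn i \<inter> S"] KW_disj[OF i] by blast
  have fR: "finite (R i)" using valid_R[OF V i] finite_subset by blast
  have "card (PiE (Wd i \<inter> S) (\<lambda>_. Blk A m)) \<le> card (PiE (R i) (\<lambda>_. A))"
    by (rule count_le[OF _ gX_sub[OF V i] P]) (use fR fA hD in \<open>simp_all add: finite_PiE\<close>)
  then have "card A ^ (m * card (Wd i \<inter> S)) \<le> card A ^ card (R i)"
    using card_PiE_Blk[OF fA, of "Wd i \<inter> S" m] card_PiE_const[OF fR, of A]
    by (simp add: Wd_def)
  then show ?thesis using A2 by (simp add: power_le_imp_le_exp)
qed


lemma fin_W: "finite (Wd i \<inter> S)" by (simp add: Wd_def)

lemma loc_nat:
  assumes L: "locality_le 1 S m R" and i: "i \<in> receivers" and ne: "Wd i \<inter> S \<noteq> {}"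
  shows "card (R i) \<le> m * card (Wd i \<inter> S)"
proof -
  have "real (card (R i)) \<le> 1 * real m * real (card (Wd i \<inter> S))" using L i ne unfolding locality_le_def by blast
  then have "real (card (R i)) \<le> real (m * card (Wd i \<inter> S))" by simp
  then show ?thesis by linarith
qed

lemma code_dep:
  assumes fA: "finite A" and A2: "card A \<ge> 2" and V: "valid_code A S m l E R" and L: "locality_le 1 S m R"
    and i: "i \<in> receivers" and ne: "Wd i \<inter> S \<noteq> {}"
    and x: "x \<in> msgs A m S" and y: "y \<in> msgs A m S"
    and agree: "\<forall>v \<in> (Wd i \<inter> S) \<union> (Kn i \<inter> S). x v = y v"
  shows "restrict (E x) (R i) = restrict (E y) (R i)"
proof -
  obtain D where P: "PiE (Wd i \<inter> S) (\<lambda>_. Blk A m) \<subseteq> (\<lambda>x. restrict x (Wd i \<inter> S)) ` {z \<in> msgs A m S. \<forall>v\<in>Kn i \<inter> S. z v = x v}"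
    and hD: "\<forall>z \<in> {z \<in> msgs A m S. \<forall>v\<in>Kn i \<inter> S. z v = x v}. restrict z (Wd i \<inter> S) = D (restrict (E z) (R i))"
    using recv_setup[OF V i x, of "Kn i \<inter> S"] KW_disj[OF i] by blast
  have fR: "finite (R i)" using valid_R[OF V i] finite_subset by blast
  have A1: "card A \<ge> 1" using A2 by simp
  have "card (PiE (R i) (\<lambda>_. A)) \<le> card (PiE (Wd i \<inter> S) (\<lambda>_. Blk A m))"
    unfolding card_PiE_const[OF fR] card_PiE_Blk[OF fA fin_W]
    by (rule power_increasing[OF loc_nat[OF L i ne]]) (use A1 in simp)
  show ?thesis
  proof (rule count_inj[OF _ gX_sub[OF V i] P \<open>card _ \<le> card _\<close>])
    show "finite (PiE (R i) (\<lambda>_. A))" using fR fA by (simp add: finite_PiE)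
    show "\<And>z. z \<in> {z \<in> msgs A m S. \<forall>v\<in>Kn i \<inter> S. z v = x v} \<Longrightarrow> restrict z (Wd i \<inter> S) = D (restrict (E z) (R i))"
      using hD by blast
    show "x \<in> {z \<in> msgs A m S. \<forall>v\<in>Kn i \<inter> S. z v = x v}" using x by simp
    show "y \<in> {z \<in> msgs A m S. \<forall>v\<in>Kn i \<inter> S. z v = x v}" using y agree by simp
    show "restrict x (Wd i \<inter> S) = restrict y (Wd i \<inter> S)"
      by (rule restrict_ext) (use agree in blast)
  qed
qed

lemma card_PiE_pin:
  assumes fR: "finite R" and p: "p \<in> R"
  shows "card (PiE R (\<lambda>q. if q = p then {c} else A)) = card A ^ (card R - 1)"
proof -
  have "card (PiE R (\<lambda>q. if q = p then {c} else A)) = (\<Prod>q\<in>R. card (if q = p then {c} else A))"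
    by (rule card_PiE[OF fR])
  also have "\<dots> = card (if p = p then {c} else A) * (\<Prod>q\<in>R - {p}. card (if q = p then {c} else A))"
    by (rule prod.remove[OF fR p])
  also have "(\<Prod>q\<in>R - {p}. card (if q = p then {c} else A)) = (\<Prod>q\<in>R - {p}. card A)"
    by (rule prod.cong) auto
  also have "\<dots> = card A ^ (card R - 1)" using fR p by simp
  finally show ?thesis by simp
qed

lemma code_disj:
  assumes fA: "finite A" and A2: "card A \<ge> 2" and V: "valid_code A S m l E R" and L: "locality_le 1 S m R"
    and i: "i \<in> receivers" and j: "j \<in> receivers" and ij: "i \<noteq> j"
    and nei: "Wd i \<inter> S \<noteq> {}" and nej: "Wd j \<inter> S \<noteq> {}"
    and hyp: "Wd j \<inter> Kn i \<inter> S = {}"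
  shows "R i \<inter> R j = {}"
proof (rule ccontr)
  assume "R i \<inter> R j \<noteq> {}"
  then obtain p where pi: "p \<in> R i" and pj: "p \<in> R j" by blast
  obtain a0 where a0: "a0 \<in> A" using A2 by (metis card.empty ex_in_conv not_numeral_le_zero)
  define x0 where "x0 = (\<lambda>j k. if j \<in> S \<and> k < m then a0 else undefined)"
  have x0m: "x0 \<in> msgs A m S" unfolding x0_def by (rule msgs_ex[OF a0])
  define U where "U = - (Wd j \<inter> S)"
  obtain D where P: "PiE (Wd j \<inter> S) (\<lambda>_. Blk A m) \<subseteq> (\<lambda>x. restrict x (Wd j \<inter> S)) ` {z \<in> msgs A m S. \<forall>v\<in>U. z v = x0 v}"
    and hD: "\<forall>z \<in> {z \<in> msgs A m S. \<forall>v\<in>U. z v = x0 v}. restrict z (Wd j \<inter> S) = D (restrict (E z) (R j))"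
    using recv_setup[OF V j x0m, of U] KW_disj[OF j] unfolding U_def by blast
  have fR: "finite (R j)" using valid_R[OF V j] finite_subset by blast
  have gX: "(\<lambda>x. restrict (E x) (R j)) ` {z \<in> msgs A m S. \<forall>v\<in>U. z v = x0 v}
      \<subseteq> PiE (R j) (\<lambda>q. if q = p then {E x0 p} else A)"
  proof
    fix c assume "c \<in> (\<lambda>x. restrict (E x) (R j)) ` {z \<in> msgs A m S. \<forall>v\<in>U. z v = x0 v}"
    then obtain x where x: "x \<in> msgs A m S" and xU: "\<forall>v\<in>U. x v = x0 v" and c: "c = restrict (E x) (R j)" by blast
    have EA: "\<forall>q\<in>R j. E x q \<in> A" using valid_E[OF V x] valid_R[OF V j] by blast
    have WW: "Wd i \<inter> Wd j = {}" by (rule WW_disj[OF i j ij])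
    have "\<forall>v \<in> (Wd i \<inter> S) \<union> (Kn i \<inter> S). x v = x0 v"
      using xU WW hyp unfolding U_def by blast
    then have "restrict (E x) (R i) = restrict (E x0) (R i)"
      by (rule code_dep[OF fA A2 V L i nei x x0m])
    then have "E x p = E x0 p" using pi by (metis restrict_apply')
    then show "c \<in> PiE (R j) (\<lambda>q. if q = p then {E x0 p} else A)"
      unfolding c using EA by (simp add: restrict_PiE_iff)
  qed
  have "card (PiE (Wd j \<inter> S) (\<lambda>_. Blk A m)) \<le> card (PiE (R j) (\<lambda>q. if q = p then {E x0 p} else A))"
    by (rule count_le[OF _ gX P]) (use fR fA hD in \<open>simp_all add: finite_PiE\<close>)
  then have le: "card A ^ (m * card (Wd j \<inter> S)) \<le> card A ^ (card (R j) - 1)"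
    unfolding card_PiE_Blk[OF fA fin_W] card_PiE_pin[OF fR pj] .
  have c1: "card (R j) \<ge> 1" using fR pj by (metis One_nat_def Suc_leI card_gt_0_iff empty_iff)
  have c2: "card (R j) \<le> m * card (Wd j \<inter> S)" by (rule loc_nat[OF L j nej])
  have "card A ^ (card (R j) - 1) < card A ^ (m * card (Wd j \<inter> S))"
    by (rule power_strict_increasing) (use c1 c2 A2 in auto)
  then show False using le by simp
qed


lemma pair_disj:
  assumes fA: "finite A" and A2: "card A \<ge> 2" and V: "valid_code A S m l E R" and L: "locality_le 1 S m R"
    and i: "i \<in> receivers" and j: "j \<in> receivers" and ij: "i \<noteq> j"
    and hyp: "Wd j \<inter> Kn i \<inter> S = {} \<or> Wd i \<inter> Kn j \<inter> S = {}"
  shows "(if Wd i \<inter> S = {} then {} else R i) \<inter> (if Wd j \<inter> S = {} then {} else R j) = {}"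
proof (cases "Wd i \<inter> S = {} \<or> Wd j \<inter> S = {}")
  case True then show ?thesis by auto
next
  case False
  then have nei: "Wd i \<inter> S \<noteq> {}" and nej: "Wd j \<inter> S \<noteq> {}" by auto
  from hyp have "R i \<inter> R j = {}"
  proof
    assume "Wd j \<inter> Kn i \<inter> S = {}"
    then show ?thesis by (rule code_disj[OF fA A2 V L i j ij nei nej])
  next
    assume "Wd i \<inter> Kn j \<inter> S = {}"
    then have "R j \<inter> R i = {}" using ij by (intro code_disj[OF fA A2 V L j i _ nej nei]) auto
    then show ?thesis by blast
  qed
  then show ?thesis using nei nej by simp
qed

lemma pw_cond:
  assumes "S \<subseteq> F1 \<or> S \<subseteq> F2"
  shows "(Wd 2 \<inter> Kn 1 \<inter> S = {} \<or> Wd 1 \<inter> Kn 2 \<inter> S = {}) \<and>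
         (Wd 3 \<inter> Kn 1 \<inter> S = {} \<or> Wd 1 \<inter> Kn 3 \<inter> S = {}) \<and>
         (Wd 3 \<inter> Kn 2 \<inter> S = {} \<or> Wd 2 \<inter> Kn 3 \<inter> S = {})"
  using assms
proof
  assume "S \<subseteq> F1"
  then have "Wd 2 \<inter> Kn 1 \<inter> S = {}" "Wd 1 \<inter> Kn 3 \<inter> S = {}" "Wd 3 \<inter> Kn 2 \<inter> S = {}"
    by (auto simp: Wd_def Kn_def F1_def)
  then show ?thesis by blast
next
  assume "S \<subseteq> F2"
  then have "Wd 1 \<inter> Kn 2 \<inter> S = {}" "Wd 3 \<inter> Kn 1 \<inter> S = {}" "Wd 2 \<inter> Kn 3 \<inter> S = {}"
    by (auto simp: Wd_def Kn_def F2_def)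
  then show ?thesis by blast
qed

lemma cardS_split:
  assumes S: "S \<subseteq> {1..12}"
  shows "card S = card (Wd 1 \<inter> S) + card (Wd 2 \<inter> S) + card (Wd 3 \<inter> S)"
proof -
  have "S = (Wd 1 \<inter> S) \<union> (Wd 2 \<inter> S) \<union> (Wd 3 \<inter> S)"
    using S upto12 by (auto simp: Wd_def)
  moreover have "card ((Wd 1 \<inter> S) \<union> (Wd 2 \<inter> S) \<union> (Wd 3 \<inter> S)) = card (Wd 1 \<inter> S) + card (Wd 2 \<inter> S) + card (Wd 3 \<inter> S)"
    by (subst card_Un_disjoint; (simp add: fin_W)?; (subst card_Un_disjoint)?; auto simp: Wd_def)
  ultimately show ?thesis by simp
qed

lemma main_bound:
  assumes fA: "finite A" and A2: "card A \<ge> 2" and S: "S \<subseteq> {1..12}" and SF: "S \<subseteq> F1 \<or> S \<subseteq> F2"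
    and V: "valid_code A S m l E R" and L: "locality_le 1 S m R"
  shows "m * card S \<le> l"
proof -
  define R' where "R' i = (if Wd i \<inter> S = {} then {} else R i)" for i
  have r: "(1::nat) \<in> receivers" "(2::nat) \<in> receivers" "(3::nat) \<in> receivers" by (simp_all add: receivers_def)
  note pw = pw_cond[OF SF]
  have d12: "R' 1 \<inter> R' 2 = {}" unfolding R'_def by (rule pair_disj[OF fA A2 V L r(1) r(2)]) (use pw in auto)
  have d13: "R' 1 \<inter> R' 3 = {}" unfolding R'_def by (rule pair_disj[OF fA A2 V L r(1) r(3)]) (use pw in auto)
  have d23: "R' 2 \<inter> R' 3 = {}" unfolding R'_def by (rule pair_disj[OF fA A2 V L r(2) r(3)]) (use pw in auto)
  have low: "m * card (Wd i \<inter> S) \<le> card (R' i)" if "i \<in> receivers" for i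
    unfolding R'_def using code_lower[OF fA A2 V that] by auto
  have sub: "R' i \<subseteq> {..<l}" if "i \<in> receivers" for i
    unfolding R'_def using valid_R[OF V that] by auto
  have fin: "finite (R' i)" if "i \<in> receivers" for i using sub[OF that] finite_subset by blast
  have "card (R' 1 \<union> R' 2 \<union> R' 3) = card (R' 1) + card (R' 2) + card (R' 3)"
    using d12 d13 d23 fin[OF r(1)] fin[OF r(2)] fin[OF r(3)]
    by (simp add: card_Un_disjoint Int_Un_distrib2)
  moreover have "card (R' 1 \<union> R' 2 \<union> R' 3) \<le> l"
    using sub[OF r(1)] sub[OF r(2)] sub[OF r(3)] by (metis card_lessThan card_mono finite_lessThan le_sup_iff)
  moreover have "m * card S = m * card (Wd 1 \<inter> S) + m * card (Wd 2 \<inter> S) + m * card (Wd 3 \<inter> S)"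
    using cardS_split[OF S] by (simp add: algebra_simps)
  ultimately show ?thesis using low[OF r(1)] low[OF r(2)] low[OF r(3)] by linarith
qed


lemma cc_le: "finite S \<Longrightarrow> clique_cover S \<le> card S"
proof -
  assume fS: "finite S"
  let ?P = "(\<lambda>a. {a}) ` S"
  have "finite ?P \<and> card ?P = card S
      \<and> (\<forall>C\<in>?P. C \<noteq> {} \<and> (\<forall>a\<in>C. \<forall>b\<in>C. a \<noteq> b \<longrightarrow> adjU a b))
      \<and> pairwise disjnt ?P \<and> \<Union>?P = S"
    using fS by (auto simp: card_image pairwise_def disjnt_def)
  then show ?thesis unfolding clique_cover_def by (intro Least_le exI[of _ ?P])
qed

lemma trivial_code:
  assumes a0: "a0 \<in> A" and S: "S \<subseteq> {1..12}"
  shows "valid_code A S 1 12 (\<lambda>x p. if Suc p \<in> S then x (Suc p) 0 else a0) (\<lambda>i. (\<lambda>j. j - 1) ` (Wd i \<inter> S))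
       \<and> locality_le 1 S 1 (\<lambda>i. (\<lambda>j. j - 1) ` (Wd i \<inter> S))"
proof -
  define E0 where "E0 = (\<lambda>(x::nat \<Rightarrow> nat \<Rightarrow> 'a) p. if Suc p \<in> S then x (Suc p) 0 else a0)"
  define R0 where "R0 = (\<lambda>i. (\<lambda>j::nat. j - 1) ` (Wd i \<inter> S))"
  have xP: "if j \<in> S \<and> k < 1 then x j k \<in> A else x j k = undefined" if "x \<in> msgs A 1 S" for x j k
    using that[unfolded msgs_def mem_Collect_eq, rule_format, of j k] .
  have EA: "\<forall>x\<in>msgs A 1 S. \<forall>p<12. E0 x p \<in> A"
  proof (intro ballI allI impI)
    fix x p assume x: "x \<in> msgs A 1 S"
    show "E0 x p \<in> A" using xP[OF x, of "Suc p" 0] a0 unfolding E0_def by auto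
  qed
  have W1: "j \<in> Wd i \<Longrightarrow> 1 \<le> j \<and> j \<le> 12" for i j by (auto simp: Wd_def split: if_splits)
  have Rsub: "R0 i \<subseteq> {..<12}" for i unfolding R0_def using W1 by fastforce
  have dec: "\<exists>D. \<forall>x\<in>msgs A 1 S. D (restrict (E0 x) (R0 i)) (restrict x (Kn i \<inter> S)) = restrict x (Wd i \<inter> S)" for i
  proof (intro exI ballI)
    fix x assume x: "x \<in> msgs A 1 S"
    show "(\<lambda>c k. \<lambda>j. if j \<in> Wd i \<inter> S then (\<lambda>k. if k < 1 then c (j - 1) else undefined) else undefined)
        (restrict (E0 x) (R0 i)) (restrict x (Kn i \<inter> S)) = restrict x (Wd i \<inter> S)"
    proof
      fix j
      show "(\<lambda>c k. \<lambda>j. if j \<in> Wd i \<inter> S then (\<lambda>k. if k < 1 then c (j - 1) else undefined) else undefined)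
        (restrict (E0 x) (R0 i)) (restrict x (Kn i \<inter> S)) j = restrict x (Wd i \<inter> S) j"
      proof (cases "j \<in> Wd i \<inter> S")
        case True
        have j1: "1 \<le> j" using W1 True by blast
        have jR: "j - 1 \<in> R0 i" unfolding R0_def using True by blast
        have sj: "Suc (j - 1) = j" using j1 by simp
        have "(\<lambda>k. if k < 1 then restrict (E0 x) (R0 i) (j - 1) else undefined) = x j"
        proof
          fix k show "(if k < 1 then restrict (E0 x) (R0 i) (j - 1) else undefined) = x j k"
          proof (cases "k < 1")
            case True
            then have "k = 0" by simp
            then show ?thesis using jR sj \<open>j \<in> Wd i \<inter> S\<close> unfolding E0_def by simp
          next
            case False
            then show ?thesis using xP[OF x, of j k] by simp
          qed
        qed
        then show ?thesis using True by simp
      next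
        case False
        then show ?thesis by auto
      qed
    qed
  qed
  have V: "valid_code A S 1 12 E0 R0"
    unfolding valid_code_def using EA Rsub dec by blast
  have L: "locality_le 1 S 1 R0"
    unfolding locality_le_def R0_def
  proof (intro ballI impI)
    fix i assume "i \<in> receivers" "Wd i \<inter> S \<noteq> {}"
    have "card ((\<lambda>j. j - 1) ` (Wd i \<inter> S)) \<le> card (Wd i \<inter> S)" by (rule card_image_le[OF fin_W])
    then show "real (card ((\<lambda>j. j - 1) ` (Wd i \<inter> S))) \<le> 1 * real 1 * real (card (Wd i \<inter> S))" by simp
  qed
  show ?thesis using V L unfolding E0_def R0_def by (rule conjI)
qed

theorem lemma6:
  fixes A :: "'a set" and S :: "nat set"
  assumes "finite A" and "card A \<ge> 2"
    and "S \<subseteq> {1..12}"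
    and "MAIS S < alpha S"
  shows "beta_star A S 1 \<ge> real (clique_cover S)"
proof -
  have fA: "finite A" and A2: "card A \<ge> 2" and S: "S \<subseteq> {1..12}" using assms by auto
  have SF: "S \<subseteq> F1 \<or> S \<subseteq> F2" by (rule S_cases[OF S assms(4)])
  have fS: "finite S" using S by (rule finite_subset) simp
  obtain a0 where a0: "a0 \<in> A" using A2 by (metis card.empty ex_in_conv not_numeral_le_zero)
  let ?X = "{real l / real m | l m E R. m \<ge> 1 \<and> valid_code A S m l E R \<and> locality_le 1 S m R}"
  have ne: "?X \<noteq> {}"
  proof -
    have "real 12 / real 1 \<in> ?X"
      using trivial_code[OF a0 S] by blast
    then show ?thesis by blast
  qed
  have lb: "real (card S) \<le> v" if "v \<in> ?X" for v
  proof -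
    obtain l m E R where v: "v = real l / real m" and m: "m \<ge> 1" and V: "valid_code A S m l E R"
      and L: "locality_le 1 S m R" using \<open>v \<in> ?X\<close> by blast
    have "m * card S \<le> l" by (rule main_bound[OF fA A2 S SF V L])
    then have "real m * real (card S) \<le> real l" by (metis of_nat_le_iff of_nat_mult)
    moreover have "real m > 0" using m by simp
    ultimately show ?thesis unfolding v by (simp add: pos_le_divide_eq mult.commute)
  qed
  have "real (card S) \<le> Inf ?X" by (rule cInf_greatest[OF ne lb])
  moreover have "real (clique_cover S) \<le> real (card S)" using cc_le[OF fS] by simp
  ultimately show ?thesis unfolding beta_star_def by linarith
qed

end
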